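(* Let $R$ be a countable, cotorsion-free commutative ring. If $A$ and $B$ are torsion-free countable $R$-modules and $H=\mathrm{Hom}_R(A,B)$ is uncountable, then $H$ contains a submodule isomorphic to $R^\omega$ (the product of $\omega$ copies of $R$).
   Context: An $R$-module $B$ is torsion-free if $bs=0$ with $b\in B$ and $0\ne s\in R$ implies $b=0$. Cotorsion-free is with respect to a countable multiplicative subset $\mathbb{S}\subseteq R$ ($0\notin\mathbb{S}$, $1\in\mathbb{S}$): $R$ is $\mathbb{S}$-reduced ($\bigcap_{s\in\mathbb{S}}sR=0$), $\mathbb{S}$-torsion-free, and $\mathrm{Hom}_R(\widehat R,R)=0$ for the $\mathbb{S}$-adic completion $\widehat R$. *)

theory Defs
  imports Main "HOL.Modules" "HOL-Library.Countable_Set" "HOL-Library.Function_Algebras"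
begin

definition mult_subset :: "'r::comm_ring_1 set \<Rightarrow> bool" where
  "mult_subset S \<longleftrightarrow> 1 \<in> S \<and> 0 \<notin> S \<and> (\<forall>s\<in>S. \<forall>t\<in>S. s * t \<in> S)"

definition coset_mod :: "'r::comm_ring_1 \<Rightarrow> 'r \<Rightarrow> 'r set" where
  "coset_mod s r = {r + s * t | t. True}"

text \<open>The S-adic completion of R, realised as the inverse limit of the R/sR (s in S),
  indexed by S preordered by divisibility: compatible families of cosets.\<close>
definition completion :: "'r::comm_ring_1 set \<Rightarrow> ('r \<Rightarrow> 'r set) set" where
  "completion S = {x. (\<forall>s\<in>S. \<exists>r. x s = coset_mod s r)
      \<and> (\<forall>s\<in>S. \<forall>t\<in>S. s dvd t \<longrightarrow> x t \<subseteq> x s)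
      \<and> (\<forall>s. s \<notin> S \<longrightarrow> x s = {})}"

definition compl_add :: "'r::comm_ring_1 set \<Rightarrow> ('r \<Rightarrow> 'r set) \<Rightarrow> ('r \<Rightarrow> 'r set) \<Rightarrow> ('r \<Rightarrow> 'r set)" where
  "compl_add S x y = (\<lambda>s. if s \<in> S then {a + b | a b. a \<in> x s \<and> b \<in> y s} else {})"

definition compl_scale :: "'r::comm_ring_1 set \<Rightarrow> 'r \<Rightarrow> ('r \<Rightarrow> 'r set) \<Rightarrow> ('r \<Rightarrow> 'r set)" where
  "compl_scale S r x = (\<lambda>s. if s \<in> S then {r * a + s * t | a t. a \<in> x s} else {})"

definition hom_completion_zero :: "'r::comm_ring_1 set \<Rightarrow> bool" where
  "hom_completion_zero S \<longleftrightarrow>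
     (\<forall>h :: ('r \<Rightarrow> 'r set) \<Rightarrow> 'r.
        (\<forall>x\<in>completion S. \<forall>y\<in>completion S. h (compl_add S x y) = h x + h y)
        \<and> (\<forall>r. \<forall>x\<in>completion S. h (compl_scale S r x) = r * h x)
        \<longrightarrow> (\<forall>x\<in>completion S. h x = 0))"

definition cotorsion_free :: "'r::comm_ring_1 set \<Rightarrow> bool" where
  "cotorsion_free S \<longleftrightarrow> countable S \<and> mult_subset S
     \<and> (\<Inter>s\<in>S. {s * r | r. True}) = {0}
     \<and> (\<forall>s\<in>S. \<forall>r. s * r = 0 \<longrightarrow> r = 0)
     \<and> hom_completion_zero S"

definition torsion_free :: "('r::comm_ring_1 \<Rightarrow> 'a::ab_group_add \<Rightarrow> 'a) \<Rightarrow> bool" where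
  "torsion_free sc \<longleftrightarrow> (\<forall>b s. s \<noteq> 0 \<longrightarrow> sc s b = 0 \<longrightarrow> b = 0)"

definition Hom :: "('r::comm_ring_1 \<Rightarrow> 'a::ab_group_add \<Rightarrow> 'a) \<Rightarrow> ('r \<Rightarrow> 'b::ab_group_add \<Rightarrow> 'b) \<Rightarrow> ('a \<Rightarrow> 'b) set" where
  "Hom sA sB = {f. module_hom sA sB f}"

definition hom_scale :: "('r::comm_ring_1 \<Rightarrow> 'b::ab_group_add \<Rightarrow> 'b) \<Rightarrow> 'r \<Rightarrow> ('a \<Rightarrow> 'b) \<Rightarrow> ('a \<Rightarrow> 'b)" where
  "hom_scale sB r f = (\<lambda>a. sB r (f a))"

definition omega_scale :: "'r::comm_ring_1 \<Rightarrow> (nat \<Rightarrow> 'r) \<Rightarrow> (nat \<Rightarrow> 'r)" where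
  "omega_scale r x = (\<lambda>n. r * x n)"

end

theory Submission
  imports Defs
begin

lemma hom_diff:
  assumes "module sA" "module sB" "f \<in> Hom sA sB" "g \<in> Hom sA sB"
  shows "f - g \<in> Hom sA sB"
  using assms unfolding Hom_def module_hom_iff
  by (auto simp: module.scale_right_diff_distrib algebra_simps)

lemma drops:
  fixes sA :: "'r::comm_ring_1 \<Rightarrow> 'a::ab_group_add \<Rightarrow> 'a"
    and sB :: "'r \<Rightarrow> 'b::ab_group_add \<Rightarrow> 'b"
    and e :: "nat \<Rightarrow> 'a"
  assumes mA: "module sA" and mB: "module sB" and cB: "countable (UNIV :: 'b set)"
    and se: "\<And>a. \<exists>j. e j = a"
    and nc: "\<not> countable (Hom sA sB)"
  shows "\<exists>j\<ge>k. \<exists>f\<in>Hom sA sB. (\<forall>i<j. f (e i) = 0) \<and> f (e j) \<noteq> 0"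
proof (rule ccontr)
  assume neg: "\<not> ?thesis"
  have van: "f = 0" if f: "f \<in> Hom sA sB" "\<forall>i<k. f (e i) = 0" for f
  proof -
    have "\<forall>i<j. f (e i) = 0" for j
    proof (induction j)
      case 0 then show ?case by simp
    next
      case (Suc j)
      have "f (e j) = 0"
      proof (cases "j < k")
        case True then show ?thesis using f by auto
      next
        case False then show ?thesis using neg f(1) Suc by (meson not_le)
      qed
      then show ?case using Suc by (auto simp: less_Suc_eq)
    qed
    then have "\<forall>j. f (e j) = 0" by blast
    then show ?thesis using se by (metis zero_fun_def ext)
  qed
  have "inj_on (\<lambda>f. map (\<lambda>i. f (e i)) [0..<k]) (Hom sA sB)"
  proof (rule inj_onI)
    fix f g assume f: "f \<in> Hom sA sB" and g: "g \<in> Hom sA sB"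
      and eq: "map (\<lambda>i. f (e i)) [0..<k] = map (\<lambda>i. g (e i)) [0..<k]"
    have "\<forall>i<k. (f - g) (e i) = 0"
    proof (intro allI impI)
      fix i assume "i < k"
      then have "f (e i) = g (e i)" using eq by (metis map_eq_conv atLeastLessThan_iff set_upt le0)
      then show "(f - g) (e i) = 0" by simp
    qed
    then have "f - g = 0" using van hom_diff[OF mA mB f g] by blast
    then show "f = g" by simp
  qed
  moreover have "countable ((\<lambda>f. map (\<lambda>i. f (e i)) [0..<k]) ` Hom sA sB)"
    by (rule countable_subset[OF _ countable_lists[OF cB]]) auto
  ultimately show False using nc countable_image_inj_on by blast
qed

lemma module_omega: "module (omega_scale :: 'r::comm_ring_1 \<Rightarrow> (nat \<Rightarrow> 'r) \<Rightarrow> _)"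
  by unfold_locales (auto simp: omega_scale_def algebra_simps fun_eq_iff)

lemma module_hom_scale:
  assumes "module (sB :: 'r::comm_ring_1 \<Rightarrow> 'b::ab_group_add \<Rightarrow> 'b)"
  shows "module (hom_scale sB :: 'r \<Rightarrow> ('a \<Rightarrow> 'b) \<Rightarrow> _)"
  using assms by unfold_locales
    (auto simp: hom_scale_def fun_eq_iff module.scale_right_distrib module.scale_left_distrib module.scale_scale module.scale_one)

theorem lemma3p18:
  fixes S :: "'r::comm_ring_1 set"
    and sA :: "'r \<Rightarrow> 'a::ab_group_add \<Rightarrow> 'a"
    and sB :: "'r \<Rightarrow> 'b::ab_group_add \<Rightarrow> 'b"
  assumes "countable (UNIV :: 'r set)"
    and "cotorsion_free S"
    and "module sA" and "module sB"
    and "torsion_free sA" and "torsion_free sB"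
    and "countable (UNIV :: 'a set)" and "countable (UNIV :: 'b set)"
    and "\<not> countable (Hom sA sB)"
  shows "\<exists>\<phi> :: (nat \<Rightarrow> 'r) \<Rightarrow> ('a \<Rightarrow> 'b).
           module_hom omega_scale (hom_scale sB) \<phi> \<and> inj \<phi> \<and> range \<phi> \<subseteq> Hom sA sB"
proof -
  note mA = assms(3) and mB = assms(4) and tB = assms(6)
  define e :: "nat \<Rightarrow> 'a" where "e = from_nat_into UNIV"
  have se: "\<And>a. \<exists>j. e j = a"
    using subset_range_from_nat_into[OF assms(7)] unfolding e_def by (metis UNIV_I image_iff subsetD)
  have "\<forall>k. \<exists>j. j \<ge> k \<and> (\<exists>f\<in>Hom sA sB. (\<forall>i<j. f (e i) = 0) \<and> f (e j) \<noteq> 0)"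
    using drops[OF mA mB assms(8) se assms(9)] by blast
  then have "\<exists>J. \<forall>k. J k \<ge> k \<and> (\<exists>f\<in>Hom sA sB. (\<forall>i<J k. f (e i) = 0) \<and> f (e (J k)) \<noteq> 0)"
    by (rule choice)
  then obtain J where J: "\<And>k. J k \<ge> k \<and> (\<exists>f\<in>Hom sA sB. (\<forall>i<J k. f (e i) = 0) \<and> f (e (J k)) \<noteq> 0)"
    by blast
  then have "\<forall>k. \<exists>f. f \<in> Hom sA sB \<and> (\<forall>i<J k. f (e i) = 0) \<and> f (e (J k)) \<noteq> 0"
    by blast
  then have "\<exists>G. \<forall>k. G k \<in> Hom sA sB \<and> (\<forall>i<J k. G k (e i) = 0) \<and> G k (e (J k)) \<noteq> 0"
    by (rule choice)
  then obtain G where G: "\<And>k. G k \<in> Hom sA sB \<and> (\<forall>i<J k. G k (e i) = 0) \<and> G k (e (J k)) \<noteq> 0"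
    by blast
  define c :: "nat \<Rightarrow> nat" where "c = rec_nat 0 (\<lambda>_ cn. Suc (J cn))"
  have c0: "c 0 = 0" and cS: "\<And>n. c (Suc n) = Suc (J (c n))" by (simp_all add: c_def)
  define k where "k n = J (c n)" for n
  define g where "g n = G (c n)" for n
  have kS: "k n < k (Suc n)" for n
    using J[of "c (Suc n)"] cS[of n] unfolding k_def by simp
  have smk: "strict_mono k" using kS by (simp add: strict_mono_Suc_iff)
  have kge: "n \<le> k n" for n
  proof (induction n)
    case (Suc n) then show ?case using kS[of n] by linarith
  qed simp
  have gH: "g n \<in> Hom sA sB" for n using G[of "c n"] unfolding g_def by (rule conjunct1)
  have gv: "\<And>i. i < k n \<Longrightarrow> g n (e i) = 0" for n using G[of "c n"] unfolding g_def k_def by simp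
  have gnz: "g n (e (k n)) \<noteq> 0" for n using G[of "c n"] unfolding g_def k_def by simp
  have gmh: "module_hom sA sB (g n)" for n using gH[of n] unfolding Hom_def by simp
  have gadd: "g n (a + b) = g n a + g n b" for n a b
    by (rule module_hom.add[OF gmh])
  have gsc: "g n (sA r a) = sB r (g n a)" for n r a
    by (rule module_hom.scale[OF gmh])
  define idx where "idx a = (SOME j. e j = a)" for a
  have eidx: "e (idx a) = a" for a unfolding idx_def by (rule someI_ex[OF se])
  have van: "idx a < n \<Longrightarrow> g n a = 0" for n a
  proof -
    assume "idx a < n"
    then have "idx a < k n" using kge[of n] by linarith
    then have "g n (e (idx a)) = 0" by (rule gv)
    then show "g n a = 0" by (simp only: eidx)
  qed
  define \<phi> :: "(nat \<Rightarrow> 'r) \<Rightarrow> ('a \<Rightarrow> 'b)"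
    where "\<phi> x a = (\<Sum>n<Suc (idx a). sB (x n) (g n a))" for x a
  have trunc: "\<phi> x a = (\<Sum>n<M. sB (x n) (g n a))" if z: "\<forall>n\<ge>M. g n a = 0" for x a M
  proof -
    define N where "N = max M (Suc (idx a))"
    have "(\<Sum>n<N. sB (x n) (g n a)) = (\<Sum>n<M. sB (x n) (g n a))"
      by (rule sum.mono_neutral_right) (auto simp: N_def z module.scale_zero_right[OF mB])
    moreover have "(\<Sum>n<N. sB (x n) (g n a)) = \<phi> x a"
      unfolding \<phi>_def
      by (rule sum.mono_neutral_right) (auto simp: N_def van module.scale_zero_right[OF mB])
    ultimately show ?thesis by simp
  qed
  have inH: "\<phi> x \<in> Hom sA sB" for x
    unfolding Hom_def mem_Collect_eq module_hom_iff
  proof (intro conjI mA mB allI)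
    fix a b
    define M where "M = Suc (max (idx a) (max (idx b) (idx (a + b))))"
    have "\<phi> x (a + b) = (\<Sum>n<M. sB (x n) (g n (a + b)))"
      by (rule trunc) (auto simp: M_def van)
    also have "\<dots> = (\<Sum>n<M. sB (x n) (g n a)) + (\<Sum>n<M. sB (x n) (g n b))"
      by (simp add: gadd module.scale_right_distrib[OF mB] sum.distrib)
    also have "\<dots> = \<phi> x a + \<phi> x b"
      by (simp add: trunc[of M a x] trunc[of M b x] M_def van)
    finally show "\<phi> x (a + b) = \<phi> x a + \<phi> x b" .
  next
    fix r a
    define M where "M = Suc (max (idx a) (idx (sA r a)))"
    have "\<phi> x (sA r a) = (\<Sum>n<M. sB (x n) (g n (sA r a)))"
      by (rule trunc) (auto simp: M_def van)
    also have "\<dots> = sB r (\<Sum>n<M. sB (x n) (g n a))"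
      by (simp add: gsc module.scale_sum_right[OF mB] module.scale_left_commute[OF mB])
    also have "\<dots> = sB r (\<phi> x a)"
      by (simp add: trunc[of M a x] M_def van)
    finally show "\<phi> x (sA r a) = sB r (\<phi> x a)" .
  qed
  have hom: "module_hom omega_scale (hom_scale sB) \<phi>"
    unfolding module_hom_iff
  proof (intro conjI module_omega module_hom_scale[OF mB] allI)
    fix x y
    show "\<phi> (x + y) = \<phi> x + \<phi> y"
      by (auto simp: fun_eq_iff \<phi>_def module.scale_left_distrib[OF mB] sum.distrib)
  next
    fix r x
    show "\<phi> (omega_scale r x) = hom_scale sB r (\<phi> x)"
    proof (rule ext)
      fix a
      have sc: "sB (r * s) y = sB r (sB s y)" for s y by (simp add: module.scale_scale[OF mB])
      show "\<phi> (omega_scale r x) a = hom_scale sB r (\<phi> x) a"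
        unfolding \<phi>_def omega_scale_def hom_scale_def sc module.scale_sum_right[OF mB] ..
    qed
  qed
  have "inj \<phi>"
  proof (rule injI, rule ccontr)
    fix x y assume eq: "\<phi> x = \<phi> y" and ne: "x \<noteq> y"
    then have ex: "\<exists>n. x n \<noteq> y n" by (simp add: fun_eq_iff)
    define m where "m = (LEAST n. x n \<noteq> y n)"
    have xm: "x m \<noteq> y m" unfolding m_def using ex by (rule LeastI_ex)
    have lt: "n < m \<Longrightarrow> x n = y n" for n unfolding m_def using not_less_Least by blast
    define a where "a = e (k m)"
    have z: "\<forall>n\<ge>Suc m. g n a = 0"
    proof (intro allI impI)
      fix n assume "Suc m \<le> n"
      then have "m < n" by simp
      then have "k m < k n" using smk by (rule strict_monoD[rotated])
      then show "g n a = 0" unfolding a_def by (rule gv)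
    qed
    have "\<phi> x a = (\<Sum>n<m. sB (x n) (g n a)) + sB (x m) (g m a)"
      using trunc[OF z, of x] by (simp only: sum.lessThan_Suc)
    moreover have "\<phi> y a = (\<Sum>n<m. sB (y n) (g n a)) + sB (y m) (g m a)"
      using trunc[OF z, of y] by (simp only: sum.lessThan_Suc)
    moreover have "(\<Sum>n<m. sB (y n) (g n a)) = (\<Sum>n<m. sB (x n) (g n a))"
      by (rule sum.cong) (simp_all add: lt)
    ultimately have "sB (x m) (g m a) = sB (y m) (g m a)" using eq by simp
    then have "sB (x m - y m) (g m a) = 0" by (simp add: module.scale_left_diff_distrib[OF mB])
    moreover have "x m - y m \<noteq> 0" using xm by simp
    ultimately have "g m a = 0" using tB unfolding torsion_free_def by blast
    then show False using gnz unfolding a_def by simp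
  qed
  then show ?thesis using hom inH by blast
qed

end
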